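(* Let $\gamma:\mathbb{Z}_{>0}\to(0,\infty)$ satisfy $\lim_{n\to\infty}\gamma(n)=0$, and let $\delta>0$, $\theta>0$. Consider the birth–death continuous-time Markov chain on $\mathbb{Z}_{\ge0}$ with transitions $0\to1$ at rate $\theta$, $n\to n+1$ at rate $n\gamma(n)$ for $n\ge1$, and $n\to n-1$ at rate $n\delta$ for $n\ge1$, and for $n\ge1$ let $T_n$ be the first hitting time of $0$ from $n$. Then for every $\epsilon\in(0,\delta)$ there is a constant $h(\epsilon)$, independent of $n$, such that for all $n\ge1$, $$\frac{\ln(n+1)}{\delta}\le\mathbb{E}[T_n]\le\frac{\ln n}{\delta-\epsilon}+h(\epsilon).$$ *)

theory Defs
  imports "HOL-Analysis.Analysis"
begin

text \<open>Birth-death continuous-time Markov chain on the naturals, given by birth rates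
  up x (x to x+1) and death rates down x (x to x-1).  The CTMC is realised, as usual,
  by its jump chain together with exponential holding times of rate q(x) = up x + down x.
  A trajectory from n until the first visit to 0 is a finite list of states; its
  probability is the product of jump probabilities, and the conditional expected
  duration given the jump path is the sum of the mean holding times 1/q(x).\<close>

definition jump_prob :: "(nat \<Rightarrow> real) \<Rightarrow> (nat \<Rightarrow> real) \<Rightarrow> nat \<Rightarrow> nat \<Rightarrow> real" where
  "jump_prob up down x y =
     (if y = Suc x then up x / (up x + down x)
      else if Suc y = x then down x / (up x + down x) else 0)"

definition hit_paths :: "nat \<Rightarrow> nat list set" where
  "hit_paths n = {xs. xs \<noteq> [] \<and> hd xs = n \<and> last xs = 0 \<and>
                      (\<forall>i < length xs - 1. xs ! i \<noteq> 0)}"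

definition path_prob :: "(nat \<Rightarrow> real) \<Rightarrow> (nat \<Rightarrow> real) \<Rightarrow> nat list \<Rightarrow> real" where
  "path_prob up down xs = (\<Prod>i < length xs - 1. jump_prob up down (xs ! i) (xs ! Suc i))"

definition path_time :: "(nat \<Rightarrow> real) \<Rightarrow> (nat \<Rightarrow> real) \<Rightarrow> nat list \<Rightarrow> real" where
  "path_time up down xs = (\<Sum>i < length xs - 1. 1 / (up (xs ! i) + down (xs ! i)))"

definition hit_prob :: "(nat \<Rightarrow> real) \<Rightarrow> (nat \<Rightarrow> real) \<Rightarrow> nat \<Rightarrow> ennreal" where
  "hit_prob up down n =
     (\<integral>\<^sup>+ xs. ennreal (path_prob up down xs) * indicator (hit_paths n) xs \<partial>count_space UNIV)"

text \<open>Expected first hitting time of 0 from n (value \<infinity> if 0 is not hit a.s.).\<close>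
definition exp_hit_time :: "(nat \<Rightarrow> real) \<Rightarrow> (nat \<Rightarrow> real) \<Rightarrow> nat \<Rightarrow> ennreal" where
  "exp_hit_time up down n =
     (\<integral>\<^sup>+ xs. ennreal (path_prob up down xs * path_time up down xs) * indicator (hit_paths n) xs
        \<partial>count_space UNIV)
     + top * (1 - hit_prob up down n)"

definition bd_up :: "real \<Rightarrow> (nat \<Rightarrow> real) \<Rightarrow> nat \<Rightarrow> real" where
  "bd_up \<theta> \<gamma> x = (if x = 0 then \<theta> else real x * \<gamma> x)"

definition bd_down :: "real \<Rightarrow> nat \<Rightarrow> real" where
  "bd_down \<delta> x = real x * \<delta>"

end

theory Submission
  imports Defs
begin

lemma hit_paths_0: "hit_paths 0 = {[0]}"
proof -
  have "xs = [0]" if "xs \<in> hit_paths 0" for xs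
  proof -
    from that have ne: "xs \<noteq> []" and h: "hd xs = 0" and nz: "\<forall>i < length xs - 1. xs ! i \<noteq> 0"
      by (auto simp: hit_paths_def)
    have "length xs - 1 = 0"
    proof (rule ccontr)
      assume "length xs - 1 \<noteq> 0"
      then have "xs ! 0 \<noteq> 0" using nz by auto
      with h ne show False by (simp add: hd_conv_nth)
    qed
    with ne h show ?thesis by (cases xs) auto
  qed
  then show ?thesis by (auto simp: hit_paths_def)
qed

lemma hit_paths_Cons:
  assumes "x \<noteq> 0"
  shows "xs \<in> hit_paths x \<longleftrightarrow> (\<exists>ys. xs = x # ys \<and> ys \<in> hit_paths (hd ys))"
proof
  assume a: "xs \<in> hit_paths x"
  then obtain ys where xs: "xs = x # ys" by (cases xs) (auto simp: hit_paths_def)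
  have "ys \<noteq> []" using a assms xs by (auto simp: hit_paths_def)
  moreover have "last ys = 0" using a xs \<open>ys \<noteq> []\<close> by (auto simp: hit_paths_def)
  moreover have "\<forall>i < length ys - 1. ys ! i \<noteq> 0"
  proof (intro allI impI)
    fix i assume "i < length ys - 1"
    then have "Suc i < length xs - 1" using xs by auto
    then have "xs ! Suc i \<noteq> 0" using a by (auto simp: hit_paths_def)
    then show "ys ! i \<noteq> 0" using xs by simp
  qed
  ultimately show "\<exists>ys. xs = x # ys \<and> ys \<in> hit_paths (hd ys)" using xs by (auto simp: hit_paths_def)
next
  assume "\<exists>ys. xs = x # ys \<and> ys \<in> hit_paths (hd ys)"
  then obtain ys where xs: "xs = x # ys" and ys: "ys \<in> hit_paths (hd ys)" by blast
  have ne: "ys \<noteq> []" "last ys = 0" and nz: "\<forall>i < length ys - 1. ys ! i \<noteq> 0"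
    using ys by (auto simp: hit_paths_def)
  have "\<forall>i < length xs - 1. xs ! i \<noteq> 0"
  proof (intro allI impI)
    fix i assume i: "i < length xs - 1"
    show "xs ! i \<noteq> 0"
    proof (cases i)
      case 0 then show ?thesis using xs assms by simp
    next
      case (Suc j) then show ?thesis using xs i nz by auto
    qed
  qed
  then show "xs \<in> hit_paths x" using xs ne by (auto simp: hit_paths_def)
qed

lemma path_prob_Cons:
  "ys \<noteq> [] \<Longrightarrow> path_prob up down (x # ys) = jump_prob up down x (hd ys) * path_prob up down ys"
  unfolding path_prob_def
  by (cases ys) (simp_all add: prod.lessThan_Suc_shift del: prod.lessThan_Suc)

lemma path_time_Cons:
  "ys \<noteq> [] \<Longrightarrow> path_time up down (x # ys) = 1 / (up x + down x) + path_time up down ys"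
  unfolding path_time_def
  by (cases ys) (simp_all add: sum.lessThan_Suc_shift del: sum.lessThan_Suc)

lemma jump_prob_nonneg:
  assumes "\<forall>x. 0 \<le> up x" "\<forall>x. 0 \<le> down x"
  shows "0 \<le> jump_prob up down x y"
  using assms unfolding jump_prob_def by simp

lemma path_prob_nonneg:
  assumes "\<forall>x. 0 \<le> up x" "\<forall>x. 0 \<le> down x"
  shows "0 \<le> path_prob up down xs"
  unfolding path_prob_def using jump_prob_nonneg[OF assms] by (simp add: prod_nonneg)

lemma path_time_nonneg:
  assumes "\<forall>x. 0 \<le> up x" "\<forall>x. 0 \<le> down x"
  shows "0 \<le> path_time up down xs"
  unfolding path_time_def using assms by (simp add: sum_nonneg)

lemma reindex_Cons:
  fixes f :: "nat list \<Rightarrow> ennreal"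
  assumes "x \<noteq> 0"
  shows "(\<integral>\<^sup>+xs. f xs * indicator (hit_paths x) xs \<partial>count_space UNIV) =
         (\<integral>\<^sup>+ys. f (x # ys) * indicator {ys. ys \<in> hit_paths (hd ys)} ys \<partial>count_space UNIV)"
proof -
  let ?g = "\<lambda>xs. f xs * indicator (hit_paths x) xs"
  have "(\<integral>\<^sup>+ys. f (x # ys) * indicator {ys. ys \<in> hit_paths (hd ys)} ys \<partial>count_space UNIV)
      = (\<integral>\<^sup>+ys. ?g (x # ys) \<partial>count_space UNIV)"
    using hit_paths_Cons[OF assms] by (intro nn_integral_cong) (auto simp: indicator_def)
  also have "\<dots> = (\<integral>\<^sup>+xs. ?g xs \<partial>count_space (range (Cons x)))"
    by (rule nn_integral_bij_count_space) (auto simp: bij_betw_def inj_on_def)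
  also have "\<dots> = (\<integral>\<^sup>+xs. ?g xs \<partial>count_space UNIV)"
    by (rule nn_integral_count_space_eq) (auto simp: hit_paths_Cons[OF assms] indicator_def)
  finally show ?thesis by simp
qed

definition Pw :: "(nat \<Rightarrow> real) \<Rightarrow> (nat \<Rightarrow> real) \<Rightarrow> (nat \<Rightarrow> ennreal) \<Rightarrow> nat \<Rightarrow> ennreal" where
  "Pw up down w x = (\<integral>\<^sup>+xs. ennreal (path_prob up down xs) * indicator (hit_paths x) xs * w (length xs) \<partial>count_space UNIV)"

definition Tw :: "(nat \<Rightarrow> real) \<Rightarrow> (nat \<Rightarrow> real) \<Rightarrow> (nat \<Rightarrow> ennreal) \<Rightarrow> nat \<Rightarrow> ennreal" where
  "Tw up down w x = (\<integral>\<^sup>+xs. ennreal (path_prob up down xs * path_time up down xs) * indicator (hit_paths x) xs * w (length xs) \<partial>count_space UNIV)"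

lemma hd_in_hit_paths: "ys \<in> hit_paths y \<Longrightarrow> hd ys = y \<and> ys \<noteq> []"
  by (auto simp: hit_paths_def)

lemma Pw_step:
  assumes nn: "\<forall>x. 0 \<le> up x" "\<forall>x. 0 \<le> down x" and x: "x \<noteq> 0"
  shows "Pw up down w x = ennreal (jump_prob up down x (Suc x)) * Pw up down (w \<circ> Suc) (Suc x)
            + ennreal (jump_prob up down x (x - 1)) * Pw up down (w \<circ> Suc) (x - 1)"
proof -
  let ?a = "jump_prob up down x (Suc x)" and ?b = "jump_prob up down x (x - 1)"
  let ?G = "\<lambda>y ys. ennreal (path_prob up down ys) * indicator (hit_paths y) ys * (w \<circ> Suc) (length ys)"
  have a0: "0 \<le> ?a" and b0: "0 \<le> ?b" using jump_prob_nonneg[OF nn] by auto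
  have pt: "ennreal (path_prob up down (x # ys)) * w (length (x # ys)) * indicator {ys. ys \<in> hit_paths (hd ys)} ys
      = ennreal ?a * ?G (Suc x) ys + ennreal ?b * ?G (x - 1) ys" for ys
  proof (cases "ys \<in> hit_paths (hd ys)")
    case False
    then have "ys \<notin> hit_paths (Suc x)" "ys \<notin> hit_paths (x - 1)" using hd_in_hit_paths by metis+
    with False show ?thesis by simp
  next
    case True
    then have ne: "ys \<noteq> []" by (auto simp: hit_paths_def)
    have pp: "0 \<le> path_prob up down ys" by (rule path_prob_nonneg[OF nn])
    show ?thesis
    proof (cases "hd ys = Suc x")
      case h: True
      then have "ys \<notin> hit_paths (x - 1)" using hd_in_hit_paths by fastforce
      with True h ne show ?thesis
        by (simp add: path_prob_Cons ennreal_mult[OF a0 pp] mult.assoc)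
    next
      case h: False
      show ?thesis
      proof (cases "hd ys = x - 1")
        case h2: True
        then have "ys \<notin> hit_paths (Suc x)" using hd_in_hit_paths by fastforce
        with True h2 ne x b0 pp show ?thesis
          by (simp add: path_prob_Cons ennreal_mult mult.assoc)
      next
        case h2: False
        then have "ys \<notin> hit_paths (Suc x)" "ys \<notin> hit_paths (x - 1)" using hd_in_hit_paths h by metis+
        moreover have "jump_prob up down x (hd ys) = 0" using h h2 unfolding jump_prob_def by auto
        ultimately show ?thesis using ne by (simp add: path_prob_Cons)
      qed
    qed
  qed
  have "Pw up down w x = (\<integral>\<^sup>+xs. (ennreal (path_prob up down xs) * w (length xs)) * indicator (hit_paths x) xs \<partial>count_space UNIV)"
    unfolding Pw_def by (intro nn_integral_cong) (simp add: ac_simps)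
  also have "\<dots> = (\<integral>\<^sup>+ys. ennreal ?a * ?G (Suc x) ys + ennreal ?b * ?G (x - 1) ys \<partial>count_space UNIV)"
    by (subst reindex_Cons[OF x]) (simp only: pt)
  also have "\<dots> = ennreal ?a * Pw up down (w \<circ> Suc) (Suc x) + ennreal ?b * Pw up down (w \<circ> Suc) (x - 1)"
    unfolding Pw_def by (simp add: nn_integral_add nn_integral_cmult)
  finally show ?thesis .
qed

lemma pt_Cons:
  assumes nn: "\<forall>x. 0 \<le> up x" "\<forall>x. 0 \<le> down x" and ne: "ys \<noteq> []"
  shows "ennreal (path_prob up down (x # ys) * path_time up down (x # ys)) =
    ennreal (jump_prob up down x (hd ys)) * (ennreal (1 / (up x + down x)) * ennreal (path_prob up down ys)
       + ennreal (path_prob up down ys * path_time up down ys))"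
proof -
  let ?J = "jump_prob up down x (hd ys)" and ?c = "1 / (up x + down x)"
    and ?P = "path_prob up down ys" and ?T = "path_time up down ys"
  have J: "0 \<le> ?J" using jump_prob_nonneg[OF nn] by auto
  have c: "0 \<le> ?c" using nn by auto
  have P: "0 \<le> ?P" using path_prob_nonneg[OF nn] by auto
  have T: "0 \<le> ?T" using path_time_nonneg[OF nn] by auto
  have "path_prob up down (x # ys) * path_time up down (x # ys) = ?J * (?c * ?P + ?P * ?T)"
    using ne by (simp add: path_prob_Cons path_time_Cons algebra_simps)
  also have "ennreal \<dots> = ennreal ?J * ennreal (?c * ?P + ?P * ?T)"
    by (rule ennreal_mult[OF J]) (use c P T in simp)
  also have "ennreal (?c * ?P + ?P * ?T) = ennreal (?c * ?P) + ennreal (?P * ?T)"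
    by (rule ennreal_plus) (use c P T in simp_all)
  also have "ennreal (?c * ?P) = ennreal ?c * ennreal ?P"
    by (rule ennreal_mult[OF c P])
  finally show ?thesis .
qed

lemma Tw_step:
  assumes nn: "\<forall>x. 0 \<le> up x" "\<forall>x. 0 \<le> down x" and x: "x \<noteq> 0"
  shows "Tw up down w x =
     ennreal (jump_prob up down x (Suc x)) * (ennreal (1 / (up x + down x)) * Pw up down (w \<circ> Suc) (Suc x) + Tw up down (w \<circ> Suc) (Suc x))
   + ennreal (jump_prob up down x (x - 1)) * (ennreal (1 / (up x + down x)) * Pw up down (w \<circ> Suc) (x - 1) + Tw up down (w \<circ> Suc) (x - 1))"
proof -
  let ?a = "jump_prob up down x (Suc x)" and ?b = "jump_prob up down x (x - 1)"
  let ?c = "ennreal (1 / (up x + down x))"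
  let ?G = "\<lambda>y ys. ennreal (path_prob up down ys) * indicator (hit_paths y) ys * (w \<circ> Suc) (length ys)"
  let ?H = "\<lambda>y ys. ennreal (path_prob up down ys * path_time up down ys) * indicator (hit_paths y) ys * (w \<circ> Suc) (length ys)"
  have pt: "ennreal (path_prob up down (x # ys) * path_time up down (x # ys)) * w (length (x # ys)) * indicator {ys. ys \<in> hit_paths (hd ys)} ys
      = ennreal ?a * (?c * ?G (Suc x) ys + ?H (Suc x) ys) + ennreal ?b * (?c * ?G (x - 1) ys + ?H (x - 1) ys)" for ys
  proof (cases "ys \<in> hit_paths (hd ys)")
    case False
    then have "ys \<notin> hit_paths (Suc x)" "ys \<notin> hit_paths (x - 1)" using hd_in_hit_paths by metis+
    with False show ?thesis by simp
  next
    case True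
    then have ne: "ys \<noteq> []" by (auto simp: hit_paths_def)
    note e = pt_Cons[OF nn ne, of x]
    show ?thesis
    proof (cases "hd ys = Suc x")
      case h: True
      then have "ys \<notin> hit_paths (x - 1)" using hd_in_hit_paths by fastforce
      with True h ne show ?thesis
        by (simp add: e algebra_simps)
    next
      case h: False
      show ?thesis
      proof (cases "hd ys = x - 1")
        case h2: True
        then have "ys \<notin> hit_paths (Suc x)" using hd_in_hit_paths by fastforce
        with True h2 ne x show ?thesis
          by (simp add: e algebra_simps)
      next
        case h2: False
        then have "ys \<notin> hit_paths (Suc x)" "ys \<notin> hit_paths (x - 1)" using hd_in_hit_paths h by metis+
        moreover have "jump_prob up down x (hd ys) = 0" using h h2 unfolding jump_prob_def by auto
        ultimately show ?thesis using ne by (simp add: e)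
      qed
    qed
  qed
  have "Tw up down w x = (\<integral>\<^sup>+xs. (ennreal (path_prob up down xs * path_time up down xs) * w (length xs)) * indicator (hit_paths x) xs \<partial>count_space UNIV)"
    unfolding Tw_def by (intro nn_integral_cong) (simp add: ac_simps)
  also have "\<dots> = (\<integral>\<^sup>+ys. ennreal ?a * (?c * ?G (Suc x) ys + ?H (Suc x) ys) + ennreal ?b * (?c * ?G (x - 1) ys + ?H (x - 1) ys) \<partial>count_space UNIV)"
    by (subst reindex_Cons[OF x]) (simp only: pt)
  also have "\<dots> = ennreal ?a * (?c * Pw up down (w \<circ> Suc) (Suc x) + Tw up down (w \<circ> Suc) (Suc x))
       + ennreal ?b * (?c * Pw up down (w \<circ> Suc) (x - 1) + Tw up down (w \<circ> Suc) (x - 1))"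
    unfolding Pw_def Tw_def by (simp add: nn_integral_add nn_integral_cmult)
  finally show ?thesis .
qed

lemma Pw_0: "Pw up down w 0 = w 1"
proof -
  have "Pw up down w 0 = (\<integral>\<^sup>+xs. (ennreal (path_prob up down xs) * w (length xs)) * indicator {[0]} xs \<partial>count_space UNIV)"
    unfolding Pw_def hit_paths_0 by (intro nn_integral_cong) (simp add: ac_simps)
  then show ?thesis by (simp add: path_prob_def)
qed

lemma Tw_0: "Tw up down w 0 = 0"
proof -
  have "Tw up down w 0 = (\<integral>\<^sup>+xs. (ennreal (path_prob up down xs * path_time up down xs) * w (length xs)) * indicator {[0]} xs \<partial>count_space UNIV)"
    unfolding Tw_def hit_paths_0 by (intro nn_integral_cong) (simp add: ac_simps)
  then show ?thesis by (simp add: path_time_def)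
qed

definition wL :: "nat \<Rightarrow> nat \<Rightarrow> ennreal" where "wL L n = (if n \<le> L then 1 else 0)"

lemma wL_Suc: "wL (Suc L) \<circ> Suc = wL L"
  by (auto simp: wL_def fun_eq_iff)

lemma Pw_wL0: "Pw up down (wL 0) x = 0"
  unfolding Pw_def by (subst nn_integral_cong[where v="\<lambda>_. 0"]) (auto simp: wL_def indicator_def hit_paths_def)

lemma Tw_wL0: "Tw up down (wL 0) x = 0"
  unfolding Tw_def by (subst nn_integral_cong[where v="\<lambda>_. 0"]) (auto simp: wL_def indicator_def hit_paths_def)

lemma SUP_wL: "(SUP L. c * wL L n) = (c::ennreal)"
proof (rule antisym)
  show "(SUP L. c * wL L n) \<le> c" by (rule SUP_least) (auto simp: wL_def)
  show "c \<le> (SUP L. c * wL L n)" by (rule SUP_upper2[of n]) (auto simp: wL_def)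
qed

lemma int_SUP_wL:
  "(\<integral>\<^sup>+xs. g xs * (\<lambda>_. 1) (length xs) \<partial>count_space UNIV) = (SUP L. \<integral>\<^sup>+xs. g xs * wL L (length xs) \<partial>count_space UNIV)"
proof -
  have "(\<integral>\<^sup>+xs. g xs * (\<lambda>_. 1) (length xs) \<partial>count_space UNIV) = (\<integral>\<^sup>+xs. (SUP L. g xs * wL L (length xs)) \<partial>count_space UNIV)"
    by (simp add: SUP_wL)
  also have "\<dots> = (SUP L. \<integral>\<^sup>+xs. g xs * wL L (length xs) \<partial>count_space UNIV)"
    by (rule nn_integral_monotone_convergence_SUP) (auto simp: incseq_def le_fun_def wL_def intro!: mult_left_mono)
  finally show ?thesis .
qed

lemma Pw_SUP: "Pw up down (\<lambda>_. 1) x = (SUP L. Pw up down (wL L) x)"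
  unfolding Pw_def by (rule int_SUP_wL)

lemma Tw_SUP: "Tw up down (\<lambda>_. 1) x = (SUP L. Tw up down (wL L) x)"
  unfolding Tw_def by (rule int_SUP_wL)

lemma trunc_bound:
  fixes U :: "nat \<Rightarrow> real"
  assumes nn: "\<forall>x. 0 \<le> up x" "\<forall>x. 0 \<le> down x"
    and U0: "\<forall>x. 0 \<le> U x"
    and sum1: "\<forall>x. x \<noteq> 0 \<longrightarrow> jump_prob up down x (Suc x) + jump_prob up down x (x - 1) \<le> 1"
    and super: "\<forall>x. x \<noteq> 0 \<longrightarrow> jump_prob up down x (Suc x) * (1 / (up x + down x) + U (Suc x))
                  + jump_prob up down x (x - 1) * (1 / (up x + down x) + U (x - 1)) \<le> U x"
  shows "Pw up down (wL L) x \<le> 1 \<and> Tw up down (wL L) x \<le> ennreal (U x)"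
proof (induction L arbitrary: x)
  case 0
  then show ?case by (simp add: Pw_wL0 Tw_wL0)
next
  case (Suc L)
  show ?case
  proof (cases "x = 0")
    case True
    then show ?thesis by (simp add: Pw_0 Tw_0 wL_def)
  next
    case x: False
    let ?a = "jump_prob up down x (Suc x)" and ?b = "jump_prob up down x (x - 1)"
    let ?c = "1 / (up x + down x)"
    have a0: "0 \<le> ?a" and b0: "0 \<le> ?b" using jump_prob_nonneg[OF nn] by auto
    have c0: "0 \<le> ?c" using nn by auto
    have u1: "0 \<le> U (Suc x)" and u2: "0 \<le> U (x - 1)" using U0 by auto
    note IH1 = Suc.IH[of "Suc x"] and IH2 = Suc.IH[of "x - 1"]
    have "Pw up down (wL (Suc L)) x = ennreal ?a * Pw up down (wL L) (Suc x) + ennreal ?b * Pw up down (wL L) (x - 1)"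
      using Pw_step[OF nn x, of "wL (Suc L)"] by (simp add: wL_Suc)
    also have "\<dots> \<le> ennreal ?a * 1 + ennreal ?b * 1"
      using IH1 IH2 by (intro add_mono mult_left_mono) auto
    also have "\<dots> = ennreal (?a + ?b)" using a0 b0 by (simp add: ennreal_plus)
    also have "\<dots> \<le> 1" using sum1 x by simp
    finally have P: "Pw up down (wL (Suc L)) x \<le> 1" .
    have "Tw up down (wL (Suc L)) x =
       ennreal ?a * (ennreal ?c * Pw up down (wL L) (Suc x) + Tw up down (wL L) (Suc x))
     + ennreal ?b * (ennreal ?c * Pw up down (wL L) (x - 1) + Tw up down (wL L) (x - 1))"
      using Tw_step[OF nn x, of "wL (Suc L)"] by (simp add: wL_Suc)
    also have "\<dots> \<le> ennreal ?a * (ennreal ?c * 1 + ennreal (U (Suc x))) + ennreal ?b * (ennreal ?c * 1 + ennreal (U (x - 1)))"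
      using IH1 IH2 by (intro add_mono mult_left_mono) auto
    also have "\<dots> = ennreal (?a * (?c + U (Suc x)) + ?b * (?c + U (x - 1)))"
      using a0 b0 c0 u1 u2 by (simp add: ennreal_plus ennreal_mult)
    also have "\<dots> \<le> ennreal (U x)" using super x by (intro ennreal_leI) auto
    finally show ?thesis using P by simp
  qed
qed

lemma growth_contra:
  fixes F g :: "nat \<Rightarrow> real"
  assumes gpos: "\<forall>x. g (Suc x) > 0" and gle: "\<forall>x\<ge>N. g (Suc x) \<le> d" and d: "d > 0"
    and rel: "\<forall>x. g (Suc x) * (F (Suc (Suc x)) - F (Suc x)) \<ge> d * (F (Suc x) - F x)"
    and bd: "\<forall>x. F x \<le> B" and m: "F (Suc m) - F m > 0"
  shows False
proof -
  define D where "D x = F (Suc x) - F x" for x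
  have relD: "g (Suc x) * D (Suc x) \<ge> d * D x" for x using rel unfolding D_def by auto
  have pos: "D x > 0" if "m \<le> x" for x
    using that
  proof (induction rule: dec_induct)
    case base then show ?case using m by (simp add: D_def)
  next
    case (step n)
    have "g (Suc n) * D (Suc n) > 0" using relD[of n] step.IH d
      by (smt (verit) mult_pos_pos)
    then show ?case using gpos[rule_format, of n] by (auto simp: zero_less_mult_iff)
  qed
  define M where "M = max m N"
  have mono: "D x \<le> D (Suc x)" if "M \<le> x" for x
  proof -
    have "g (Suc x) * D x \<le> d * D x"
      using gle that pos[of x] unfolding M_def by (intro mult_right_mono) auto
    also have "\<dots> \<le> g (Suc x) * D (Suc x)" by (rule relD)
    finally show ?thesis using gpos by (simp add: mult_le_cancel_left_pos)
  qed
  have geq: "D M \<le> D x" if "M \<le> x" for x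
    using that
  proof (induction rule: dec_induct)
    case base then show ?case by simp
  next
    case (step n) then show ?case using mono[of n] by simp
  qed
  have lin: "F M + real K * D M \<le> F (M + K)" for K
  proof (induction K)
    case 0 then show ?case by simp
  next
    case (Suc K)
    have "F (M + Suc K) = F (M + K) + D (M + K)" by (simp add: D_def)
    moreover have "D M \<le> D (M + K)" by (rule geq) simp
    ultimately show ?case using Suc by (simp add: algebra_simps)
  qed
  have DM: "D M > 0" using pos[of M] unfolding M_def by simp
  obtain K :: nat where K: "B - F M < real K * D M" using ex_less_of_nat_mult[OF DM] by blast
  have "F (M + K) > B" using lin[of K] K by simp
  with bd show False by (simp add: not_less[symmetric])
qed

fun bw :: "(nat \<Rightarrow> real) \<Rightarrow> real \<Rightarrow> real \<Rightarrow> nat \<Rightarrow> real" where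
  "bw G d c 0 = c"
| "bw G d c (Suc j) = (1 + G j * bw G d c j) / d"

lemma bw_nonneg: "0 \<le> c \<Longrightarrow> 0 < d \<Longrightarrow> \<forall>j. 0 \<le> G j \<Longrightarrow> 0 \<le> bw G d c j"
  by (induction j) auto

lemma jp_up:
  assumes "x \<noteq> 0" "\<gamma> x > 0" "\<delta> > 0"
  shows "jump_prob (bd_up \<theta> \<gamma>) (bd_down \<delta>) x (Suc x) = \<gamma> x / (\<gamma> x + \<delta>)"
proof -
  have "jump_prob (bd_up \<theta> \<gamma>) (bd_down \<delta>) x (Suc x) = (real x * \<gamma> x) / (real x * (\<gamma> x + \<delta>))"
    using assms by (simp add: jump_prob_def bd_up_def bd_down_def distrib_left)
  also have "\<dots> = \<gamma> x / (\<gamma> x + \<delta>)" using assms by simp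
  finally show ?thesis .
qed

lemma jp_down:
  assumes "x \<noteq> 0" "\<gamma> x > 0" "\<delta> > 0"
  shows "jump_prob (bd_up \<theta> \<gamma>) (bd_down \<delta>) x (x - 1) = \<delta> / (\<gamma> x + \<delta>)"
proof -
  have ne: "x - 1 \<noteq> Suc x" "Suc (x - 1) = x" using assms by auto
  have "jump_prob (bd_up \<theta> \<gamma>) (bd_down \<delta>) x (x - 1) = (real x * \<delta>) / (real x * (\<gamma> x + \<delta>))"
    unfolding jump_prob_def using assms ne by (simp only: if_False if_True bd_up_def bd_down_def distrib_left) simp
  also have "\<dots> = \<delta> / (\<gamma> x + \<delta>)" using assms by simp
  finally show ?thesis .
qed

lemma q_eq:
  assumes "x \<noteq> 0"
  shows "1 / (bd_up \<theta> \<gamma> x + bd_down \<delta> x) = 1 / (real x * (\<gamma> x + \<delta>))"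
  using assms by (simp add: bd_up_def bd_down_def algebra_simps)

lemma ennreal_lin:
  fixes a b p q :: real
  assumes "0 \<le> a" "0 \<le> b" "0 \<le> p" "0 \<le> q"
  shows "ennreal a * ennreal p + ennreal b * ennreal q = ennreal (a * p + b * q)"
  using assms by (simp add: ennreal_plus ennreal_mult)

lemma alg2:
  fixes g d s P A B :: real
  assumes "s > 0" and "P = g / s * A + d / s * B"
  shows "s * P = g * A + d * B"
proof -
  have "s \<noteq> 0" using assms by simp
  then show ?thesis unfolding assms(2) by (simp add: field_simps)
qed

lemma alg0:
  fixes g d r A a b s :: real
  assumes hs: "s = g + d" and "s > 0" "r > 0"
  shows "g / s * (1 / (r * s) + (A + a)) + d / s * (1 / (r * s) + (A - b))
       = A + (1 / r + g * a - d * b) / s"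
proof -
  have n1: "s \<noteq> 0" "r \<noteq> 0" using assms by auto
  have "g / s * (1 / (r * s) + (A + a)) + d / s * (1 / (r * s) + (A - b))
      = (g * (1 + r * s * (A + a)) + d * (1 + r * s * (A - b))) / (r * s * s)"
    using n1 by (simp add: field_simps)
  also have "g * (1 + r * s * (A + a)) + d * (1 + r * s * (A - b)) = (g + d) + r * s * (g + d) * A + r * s * (g * a - d * b)"
    by (simp add: algebra_simps)
  also have "\<dots> = s + r * s * s * A + r * s * (g * a - d * b)" by (simp add: hs)
  also have "(s + r * s * s * A + r * s * (g * a - d * b)) / (r * s * s) = A + (1 / r + g * a - d * b) / s"
    using n1 by (simp add: field_simps)
  finally show ?thesis .
qed

lemma alg1:
  fixes g d r A a b :: real
  assumes "g + d > 0" "r > 0"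
  shows "g / (g + d) * (1 / (r * (g + d)) + (A + a)) + d / (g + d) * (1 / (r * (g + d)) + (A - b))
       = A + (1 / r + g * a - d * b) / (g + d)"
  by (rule alg0) (use assms in auto)

lemma main6:
  fixes \<gamma> :: "nat \<Rightarrow> real" and \<delta> \<theta> \<epsilon> :: real
  assumes "\<forall>n\<ge>1. \<gamma> n > 0"
    and "\<gamma> \<longlonglongrightarrow> 0"
    and "\<delta> > 0" and "\<theta> > 0" and eps: "0 < \<epsilon> \<and> \<epsilon> < \<delta>"
  shows "\<exists>h::real. \<forall>n::nat. n \<ge> 1 \<longrightarrow>
              ennreal (ln (real n + 1) / \<delta>) \<le> exp_hit_time (bd_up \<theta> \<gamma>) (bd_down \<delta>) n \<and>
              exp_hit_time (bd_up \<theta> \<gamma>) (bd_down \<delta>) n \<le> ennreal (ln (real n) / (\<delta> - \<epsilon>) + h)"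
proof -
  let ?up = "bd_up \<theta> \<gamma>" and ?dn = "bd_down \<delta>"
  have d0: "\<delta> > 0" using assms by simp
  have gpos: "\<gamma> x > 0" if "x \<noteq> 0" for x using assms(1) that by auto
  have nn: "\<forall>x. 0 \<le> ?up x" "\<forall>x. 0 \<le> ?dn x"
    using assms gpos by (auto simp: bd_up_def bd_down_def less_imp_le)
  have "eventually (\<lambda>n. \<gamma> n < \<epsilon>) sequentially"
    using order_tendstoD(2)[OF assms(2)] eps by auto
  then obtain N0 where N0: "\<forall>x\<ge>N0. \<gamma> x < \<epsilon>" by (auto simp: eventually_sequentially)
  define N where "N = max N0 1"
  have N1: "N \<ge> 1" and gN: "\<forall>x\<ge>N. \<gamma> x \<le> \<epsilon>" using N0 by (auto simp: N_def less_imp_le)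
  have de: "\<delta> - \<epsilon> > 0" using eps by simp
  define c0 where "c0 = 1 / (real N * (\<delta> - \<epsilon>))"
  define G where "G j = \<bar>\<gamma> (N - Suc j)\<bar>" for j
  define u where "u x = (if N \<le> x then 1 / (real x * (\<delta> - \<epsilon>)) else bw G \<delta> c0 (N - x))" for x
  define U where "U x = (\<Sum>k\<in>{1..x}. u k)" for x
  have c00: "0 \<le> c0" using de by (simp add: c0_def)
  have u0: "\<forall>x. 0 \<le> u x"
    using bw_nonneg[OF c00 d0, of G] de by (auto simp: u_def G_def)
  have U0: "\<forall>x. 0 \<le> U x" using u0 by (auto simp: U_def intro: sum_nonneg)
  have USuc: "U (Suc x) = U x + u (Suc x)" for x by (simp add: U_def)
  have ukey: "1 / real x + \<gamma> x * u (Suc x) \<le> \<delta> * u x" if x: "x \<noteq> 0" for x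
  proof (cases "N \<le> x")
    case True
    have ux: "u x = 1 / (real x * (\<delta> - \<epsilon>))" using True by (simp add: u_def)
    have ux1: "u (Suc x) = 1 / (real (Suc x) * (\<delta> - \<epsilon>))" using True by (simp add: u_def)
    have "u (Suc x) \<le> 1 / (real x * (\<delta> - \<epsilon>))"
      unfolding ux1 using x de by (intro divide_left_mono mult_right_mono mult_pos_pos) auto
    then have "\<gamma> x * u (Suc x) \<le> \<epsilon> * (1 / (real x * (\<delta> - \<epsilon>)))"
      using gN True gpos[OF x] u0 by (intro mult_mono) (auto simp: less_imp_le)
    moreover have "1 / real x + \<epsilon> * (1 / (real x * (\<delta> - \<epsilon>))) = \<delta> * u x"
      unfolding ux using x de by (simp add: field_simps)
    ultimately show ?thesis by linarith
  next
    case False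
    have eq1: "N - x = Suc (N - Suc x)" using False by simp
    have eq2: "G (N - Suc x) = \<gamma> x" using False gpos[OF x] by (simp add: G_def)
    have eq3: "bw G \<delta> c0 (N - Suc x) = u (Suc x)"
    proof (cases "Suc x = N")
      case True then show ?thesis by (simp add: u_def c0_def)
    next
      case False then show ?thesis using \<open>\<not> N \<le> x\<close> by (simp add: u_def)
    qed
    have "u x = bw G \<delta> c0 (N - x)" using False by (simp add: u_def)
    also have "\<dots> = bw G \<delta> c0 (Suc (N - Suc x))" by (simp only: eq1)
    also have "\<dots> = (1 + G (N - Suc x) * bw G \<delta> c0 (N - Suc x)) / \<delta>" by (simp only: bw.simps)
    also have "\<dots> = (1 + \<gamma> x * u (Suc x)) / \<delta>" by (simp only: eq2 eq3)
    finally have "u x = (1 + \<gamma> x * u (Suc x)) / \<delta>" .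
    then have "\<delta> * u x = 1 + \<gamma> x * u (Suc x)" using d0 by simp
    moreover have "1 / real x \<le> 1" using x by simp
    ultimately show ?thesis by linarith
  qed
  have sum1: "\<forall>x. x \<noteq> 0 \<longrightarrow> jump_prob ?up ?dn x (Suc x) + jump_prob ?up ?dn x (x - 1) \<le> 1"
  proof (intro allI impI)
    fix x :: nat assume x: "x \<noteq> 0"
    have "\<gamma> x + \<delta> > 0" using gpos[OF x] d0 by simp
    then show "jump_prob ?up ?dn x (Suc x) + jump_prob ?up ?dn x (x - 1) \<le> 1"
      using jp_up[where \<theta>=\<theta> and \<gamma>=\<gamma>, OF x gpos[OF x] d0] jp_down[where \<theta>=\<theta> and \<gamma>=\<gamma>, OF x gpos[OF x] d0] by (simp add: add_divide_distrib[symmetric])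
  qed
  have super: "\<forall>x. x \<noteq> 0 \<longrightarrow> jump_prob ?up ?dn x (Suc x) * (1 / (?up x + ?dn x) + U (Suc x))
                  + jump_prob ?up ?dn x (x - 1) * (1 / (?up x + ?dn x) + U (x - 1)) \<le> U x"
  proof (intro allI impI)
    fix x :: nat assume x: "x \<noteq> 0"
    have g: "\<gamma> x > 0" by (rule gpos[OF x])
    have Ux: "U x = U (x - 1) + u x" using USuc[of "x - 1"] x by simp
    have xr: "real x > 0" using x by simp
    have "\<gamma> x / (\<gamma> x + \<delta>) * (1 / (real x * (\<gamma> x + \<delta>)) + (U x + u (Suc x)))
         + \<delta> / (\<gamma> x + \<delta>) * (1 / (real x * (\<gamma> x + \<delta>)) + (U x - u x))
       = U x + (1 / real x + \<gamma> x * u (Suc x) - \<delta> * u x) / (\<gamma> x + \<delta>)"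
      using g d0 xr by (intro alg1) auto
    also have "\<dots> \<le> U x"
      using ukey[OF x] g d0 by (simp add: divide_nonpos_pos)
    finally show "jump_prob ?up ?dn x (Suc x) * (1 / (?up x + ?dn x) + U (Suc x))
                  + jump_prob ?up ?dn x (x - 1) * (1 / (?up x + ?dn x) + U (x - 1)) \<le> U x"
      using jp_up[where \<theta>=\<theta> and \<gamma>=\<gamma>, OF x g d0] jp_down[where \<theta>=\<theta> and \<gamma>=\<gamma>, OF x g d0] q_eq[OF x, of \<theta> \<gamma> \<delta>] USuc[of x] Ux
      by (simp add: algebra_simps)
  qed
  note tb = trunc_bound[OF nn U0 sum1 super]
  have Ple: "Pw ?up ?dn (\<lambda>_. 1) x \<le> 1" for x
    unfolding Pw_SUP using tb by (intro SUP_least) auto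
  have Tle: "Tw ?up ?dn (\<lambda>_. 1) x \<le> ennreal (U x)" for x
    unfolding Tw_SUP using tb by (intro SUP_least) auto
  have c1: "((\<lambda>_. 1::ennreal) \<circ> Suc) = (\<lambda>_. 1)" by (simp add: comp_def)
  define \<pi> where "\<pi> x = enn2real (Pw ?up ?dn (\<lambda>_. 1) x)" for x
  have Ppi: "Pw ?up ?dn (\<lambda>_. 1) x = ennreal (\<pi> x)" for x
    unfolding \<pi>_def using Ple[of x] by (intro ennreal_enn2real[symmetric]) (auto intro: le_less_trans)
  have pi0: "0 \<le> \<pi> x" for x by (simp add: \<pi>_def)
  have pi1: "\<pi> x \<le> 1" for x using Ple[of x] unfolding Ppi by simp
  have pi_0: "\<pi> 0 = 1" by (simp add: \<pi>_def Pw_0)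
  have pirel: "\<pi> x = \<gamma> x / (\<gamma> x + \<delta>) * \<pi> (Suc x) + \<delta> / (\<gamma> x + \<delta>) * \<pi> (x - 1)" if x: "x \<noteq> 0" for x
  proof -
    have g: "\<gamma> x > 0" by (rule gpos[OF x])
    have a0: "0 \<le> \<gamma> x / (\<gamma> x + \<delta>)" "0 \<le> \<delta> / (\<gamma> x + \<delta>)" using g d0 by auto
    have "ennreal (\<pi> x) = ennreal (\<gamma> x / (\<gamma> x + \<delta>)) * ennreal (\<pi> (Suc x)) + ennreal (\<delta> / (\<gamma> x + \<delta>)) * ennreal (\<pi> (x - 1))"
      using Pw_step[OF nn x, of "\<lambda>_. 1"] unfolding c1 Ppi jp_up[where \<theta>=\<theta> and \<gamma>=\<gamma>, OF x g d0] jp_down[where \<theta>=\<theta> and \<gamma>=\<gamma>, OF x g d0] .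
    also have "\<dots> = ennreal (\<gamma> x / (\<gamma> x + \<delta>) * \<pi> (Suc x) + \<delta> / (\<gamma> x + \<delta>) * \<pi> (x - 1))"
      using a0 pi0 by (intro ennreal_lin) auto
    finally have e: "ennreal (\<pi> x) = ennreal (\<gamma> x / (\<gamma> x + \<delta>) * \<pi> (Suc x) + \<delta> / (\<gamma> x + \<delta>) * \<pi> (x - 1))" .
    have nnr: "0 \<le> \<gamma> x / (\<gamma> x + \<delta>) * \<pi> (Suc x) + \<delta> / (\<gamma> x + \<delta>) * \<pi> (x - 1)"
      by (intro add_nonneg_nonneg mult_nonneg_nonneg) (use a0 pi0 in auto)
    show ?thesis using e by (simp only: ennreal_inj[OF pi0 nnr])
  qed
  have pirel2: "\<gamma> (Suc x) * (\<pi> (Suc (Suc x)) - \<pi> (Suc x)) = \<delta> * (\<pi> (Suc x) - \<pi> x)" for x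
  proof -
    have g: "\<gamma> (Suc x) > 0" by (rule gpos) simp
    have "\<pi> (Suc x) = \<gamma> (Suc x) / (\<gamma> (Suc x) + \<delta>) * \<pi> (Suc (Suc x)) + \<delta> / (\<gamma> (Suc x) + \<delta>) * \<pi> x"
      using pirel[of "Suc x"] by simp
    then have "(\<gamma> (Suc x) + \<delta>) * \<pi> (Suc x) = \<gamma> (Suc x) * \<pi> (Suc (Suc x)) + \<delta> * \<pi> x"
      using g d0 by (intro alg2) auto
    then show ?thesis by (simp add: algebra_simps)
  qed
  have gpos': "\<forall>x. \<gamma> (Suc x) > 0" using gpos by simp
  have gle: "\<forall>x\<ge>N. \<gamma> (Suc x) \<le> \<delta>"
  proof (intro allI impI)
    fix x assume "N \<le> x"
    then have "\<gamma> (Suc x) \<le> \<epsilon>" using gN by simp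
    then show "\<gamma> (Suc x) \<le> \<delta>" using eps by simp
  qed
  have D0: "\<pi> (Suc 0) - \<pi> 0 = 0"
  proof (rule ccontr)
    assume "\<pi> (Suc 0) - \<pi> 0 \<noteq> 0"
    then consider "\<pi> (Suc 0) - \<pi> 0 > 0" | "(- \<pi> (Suc 0)) - (- \<pi> 0) > 0" by linarith
    then show False
    proof cases
      case 1
      show False
        by (rule growth_contra[of \<gamma> N \<delta> \<pi> 1 0]) (use gpos' gle d0 pirel2 pi1 1 in auto)
    next
      case 2
      show False
        by (rule growth_contra[of \<gamma> N \<delta> "\<lambda>x. - \<pi> x" 0 0]) (use gpos' gle d0 pirel2 pi0 2 in \<open>auto simp: algebra_simps\<close>)
    qed
  qed
  have Dz: "\<pi> (Suc x) - \<pi> x = 0" for x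
  proof (induction x)
    case 0 then show ?case using D0 by simp
  next
    case (Suc x)
    then show ?case using pirel2[of x] gpos'[rule_format, of x] by simp
  qed
  have pi_one: "\<pi> x = 1" for x
    by (induction x) (use pi_0 Dz in auto)
  have Pone: "Pw ?up ?dn (\<lambda>_. 1) x = 1" for x using Ppi pi_one by simp
  define \<phi> where "\<phi> x = enn2real (Tw ?up ?dn (\<lambda>_. 1) x)" for x
  have Tphi: "Tw ?up ?dn (\<lambda>_. 1) x = ennreal (\<phi> x)" for x
    unfolding \<phi>_def using Tle[of x] by (intro ennreal_enn2real[symmetric]) (auto intro: le_less_trans)
  have phi0: "0 \<le> \<phi> x" for x by (simp add: \<phi>_def)
  have phiU: "\<phi> x \<le> U x" for x using Tle[of x] U0 unfolding Tphi by (simp add: ennreal_le_iff)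
  have phi_0: "\<phi> 0 = 0" by (simp add: \<phi>_def Tw_0)
  have phirel: "\<phi> x = \<gamma> x / (\<gamma> x + \<delta>) * (1 / (real x * (\<gamma> x + \<delta>)) + \<phi> (Suc x))
                    + \<delta> / (\<gamma> x + \<delta>) * (1 / (real x * (\<gamma> x + \<delta>)) + \<phi> (x - 1))" if x: "x \<noteq> 0" for x
  proof -
    have g: "\<gamma> x > 0" by (rule gpos[OF x])
    let ?c = "1 / (real x * (\<gamma> x + \<delta>))"
    have c0: "0 \<le> ?c" using g d0 by simp
    have a0: "0 \<le> \<gamma> x / (\<gamma> x + \<delta>)" "0 \<le> \<delta> / (\<gamma> x + \<delta>)" using g d0 by auto
    have cp: "ennreal ?c * 1 + ennreal (\<phi> y) = ennreal (?c + \<phi> y)" for y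
      using c0 phi0 by (simp add: ennreal_plus)
    have "ennreal (\<phi> x) = ennreal (\<gamma> x / (\<gamma> x + \<delta>)) * ennreal (?c + \<phi> (Suc x)) + ennreal (\<delta> / (\<gamma> x + \<delta>)) * ennreal (?c + \<phi> (x - 1))"
      using Tw_step[OF nn x, of "\<lambda>_. 1"] unfolding c1 Pone Tphi jp_up[where \<theta>=\<theta> and \<gamma>=\<gamma>, OF x g d0] jp_down[where \<theta>=\<theta> and \<gamma>=\<gamma>, OF x g d0] q_eq[OF x] cp .
    also have "\<dots> = ennreal (\<gamma> x / (\<gamma> x + \<delta>) * (?c + \<phi> (Suc x)) + \<delta> / (\<gamma> x + \<delta>) * (?c + \<phi> (x - 1)))"
      using a0 phi0 c0 by (intro ennreal_lin) auto
    finally have e: "ennreal (\<phi> x) = ennreal (\<gamma> x / (\<gamma> x + \<delta>) * (?c + \<phi> (Suc x)) + \<delta> / (\<gamma> x + \<delta>) * (?c + \<phi> (x - 1)))" .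
    have nnr: "0 \<le> \<gamma> x / (\<gamma> x + \<delta>) * (?c + \<phi> (Suc x)) + \<delta> / (\<gamma> x + \<delta>) * (?c + \<phi> (x - 1))"
      by (intro add_nonneg_nonneg mult_nonneg_nonneg) (use a0 phi0 c0 in auto)
    show ?thesis using e by (simp only: ennreal_inj[OF phi0 nnr])
  qed
  have phirel2: "\<gamma> (Suc x) * (\<phi> (Suc (Suc x)) - \<phi> (Suc x)) = \<delta> * (\<phi> (Suc x) - \<phi> x) - 1 / real (Suc x)" for x
  proof -
    have g: "\<gamma> (Suc x) > 0" by (rule gpos) simp
    let ?g = "\<gamma> (Suc x)" and ?r = "real (Suc x)"
    let ?c = "1 / (?r * (?g + \<delta>))"
    have "\<phi> (Suc x) = ?g / (?g + \<delta>) * (?c + \<phi> (Suc (Suc x))) + \<delta> / (?g + \<delta>) * (?c + \<phi> x)"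
      using phirel[of "Suc x"] by simp
    then have h1: "(?g + \<delta>) * \<phi> (Suc x) = ?g * (?c + \<phi> (Suc (Suc x))) + \<delta> * (?c + \<phi> x)"
      using g d0 by (intro alg2) auto
    have h2: "?g * ?c + \<delta> * ?c = 1 / ?r"
    proof -
      have "?g * ?c + \<delta> * ?c = (?g + \<delta>) * ?c" by (rule distrib_right[symmetric])
      also have "\<dots> = 1 / ?r" using g d0 by simp
      finally show ?thesis .
    qed
    have h1': "?g * \<phi> (Suc x) + \<delta> * \<phi> (Suc x) = (?g * ?c + \<delta> * ?c) + ?g * \<phi> (Suc (Suc x)) + \<delta> * \<phi> x"
      using h1 by (simp add: algebra_simps)
    show ?thesis using h1' h2 by (simp add: algebra_simps)
  qed
  have phimono: "0 \<le> \<phi> (Suc m) - \<phi> m" for m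
  proof (rule ccontr)
    assume "\<not> 0 \<le> \<phi> (Suc m) - \<phi> m"
    then have m: "(- \<phi> (Suc m)) - (- \<phi> m) > 0" by simp
    have rel: "\<forall>x. \<gamma> (Suc x) * ((- \<phi> (Suc (Suc x))) - (- \<phi> (Suc x))) \<ge> \<delta> * ((- \<phi> (Suc x)) - (- \<phi> x))"
    proof
      fix x
      have "\<gamma> (Suc x) * ((- \<phi> (Suc (Suc x))) - (- \<phi> (Suc x))) = - (\<gamma> (Suc x) * (\<phi> (Suc (Suc x)) - \<phi> (Suc x)))"
        by (simp add: algebra_simps)
      also have "\<dots> = \<delta> * ((- \<phi> (Suc x)) - (- \<phi> x)) + 1 / real (Suc x)"
        unfolding phirel2 by (simp add: algebra_simps)
      finally show "\<gamma> (Suc x) * ((- \<phi> (Suc (Suc x))) - (- \<phi> (Suc x))) \<ge> \<delta> * ((- \<phi> (Suc x)) - (- \<phi> x))"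
        by simp
    qed
    show False
      by (rule growth_contra[of \<gamma> N \<delta> "\<lambda>x. - \<phi> x" 0 m]) (use gpos' gle d0 rel phi0 m in auto)
  qed
  have phiinc: "1 / real (Suc x) / \<delta> \<le> \<phi> (Suc x) - \<phi> x" for x
  proof -
    have "0 \<le> \<gamma> (Suc x) * (\<phi> (Suc (Suc x)) - \<phi> (Suc x))"
      using gpos'[rule_format, of x] phimono[of "Suc x"] by simp
    then have "1 / real (Suc x) \<le> \<delta> * (\<phi> (Suc x) - \<phi> x)" using phirel2[of x] by simp
    then show ?thesis using d0 by (simp add: divide_le_eq ac_simps)
  qed
  have lower: "harm n / \<delta> \<le> \<phi> n" for n
  proof (induction n)
    case 0 then show ?case by (simp add: phi_0 harm_def)
  next
    case (Suc n)
    have "harm (Suc n) / \<delta> = harm n / \<delta> + 1 / real (Suc n) / \<delta>"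
      by (simp add: harm_Suc add_divide_distrib inverse_eq_divide)
    also have "\<dots> \<le> \<phi> n + (\<phi> (Suc n) - \<phi> n)" using Suc.IH phiinc[of n] by (rule add_mono)
    finally show ?case by simp
  qed
  define C where "C = (\<Sum>k\<in>{1..N}. u k)"
  have C0: "0 \<le> C" unfolding C_def using u0 by (intro sum_nonneg) auto
  have Ub: "U n \<le> C + harm n / (\<delta> - \<epsilon>)" for n
  proof (induction n)
    case 0 then show ?case using C0 by (simp add: U_def harm_def)
  next
    case (Suc n)
    have hn: "0 \<le> harm (Suc n) / (\<delta> - \<epsilon>)" using de by (simp add: harm_nonneg)
    show ?case
    proof (cases "Suc n \<le> N")
      case True
      have "U (Suc n) \<le> C" unfolding U_def C_def
        using True u0 by (intro sum_mono2) auto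
      then show ?thesis using hn by simp
    next
      case False
      have us: "u (Suc n) = 1 / (real (Suc n) * (\<delta> - \<epsilon>))" using False by (simp add: u_def)
      have "harm (Suc n) / (\<delta> - \<epsilon>) = harm n / (\<delta> - \<epsilon>) + 1 / (real (Suc n) * (\<delta> - \<epsilon>))"
        by (simp add: harm_Suc add_divide_distrib inverse_eq_divide divide_divide_eq_left)
      then show ?thesis using Suc.IH USuc[of n] us by simp
    qed
  qed
  have harm_le: "harm n \<le> ln (real n) + 1" if "n \<ge> 1" for n
  proof -
    have "harm n - ln (real n) \<le> harm 1 - ln (real (1::nat))"
      using euler_mascheroni_sequence_decreasing[of 1 n] that by simp
    then show ?thesis by (simp add: harm_def)
  qed
  have Ehit: "exp_hit_time ?up ?dn n = ennreal (\<phi> n)" for n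
  proof -
    have "exp_hit_time ?up ?dn n = Tw ?up ?dn (\<lambda>_. 1) n + top * (1 - Pw ?up ?dn (\<lambda>_. 1) n)"
      by (simp add: exp_hit_time_def hit_prob_def Tw_def Pw_def)
    then show ?thesis by (simp add: Pone Tphi)
  qed
  show ?thesis
  proof (intro exI allI impI conjI)
    fix n :: nat assume n: "n \<ge> 1"
    have "ln (real n + 1) / \<delta> \<le> harm n / \<delta>"
      using ln_le_harm[of n] d0 by (simp add: divide_right_mono)
    also have "\<dots> \<le> \<phi> n" by (rule lower)
    finally show "ennreal (ln (real n + 1) / \<delta>) \<le> exp_hit_time ?up ?dn n"
      unfolding Ehit by (rule ennreal_leI)
    have "\<phi> n \<le> U n" by (rule phiU)
    also have "\<dots> \<le> C + harm n / (\<delta> - \<epsilon>)" by (rule Ub)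
    also have "\<dots> \<le> C + (ln (real n) + 1) / (\<delta> - \<epsilon>)"
      using harm_le[OF n] de by (simp add: divide_right_mono)
    also have "\<dots> = ln (real n) / (\<delta> - \<epsilon>) + (C + 1 / (\<delta> - \<epsilon>))"
      by (simp add: add_divide_distrib)
    finally show "exp_hit_time ?up ?dn n \<le> ennreal (ln (real n) / (\<delta> - \<epsilon>) + (C + 1 / (\<delta> - \<epsilon>)))"
      unfolding Ehit by (rule ennreal_leI)
  qed
qed

theorem claim6:
  fixes \<gamma> :: "nat \<Rightarrow> real" and \<delta> \<theta> :: real
  assumes "\<forall>n\<ge>1. \<gamma> n > 0"
    and "\<gamma> \<longlonglongrightarrow> 0"
    and "\<delta> > 0" and "\<theta> > 0"
  shows "\<forall>\<epsilon>. 0 < \<epsilon> \<and> \<epsilon> < \<delta> \<longrightarrow>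
           (\<exists>h::real. \<forall>n::nat. n \<ge> 1 \<longrightarrow>
              ennreal (ln (real n + 1) / \<delta>) \<le> exp_hit_time (bd_up \<theta> \<gamma>) (bd_down \<delta>) n \<and>
              exp_hit_time (bd_up \<theta> \<gamma>) (bd_down \<delta>) n \<le> ennreal (ln (real n) / (\<delta> - \<epsilon>) + h))"
  using main6[OF assms] by blast

end
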